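(* If $M$ is a perfect matching of an ST graph $G$, then $G$ is isomorphic to $\mathrm{Split}(\mathrm{Join}(G,M))$.
   Context: A digraph $G$ is a finite set $V(G)$ with $E(G)\subseteq V(G)\times V(G)$ (loops allowed). A source has no in-neighbors, a sink has no out-neighbors; $G$ is an ST graph if every vertex is a source or a sink. A matching $M$ is a set of arcs no two of which share an endpoint; $V(M)$ is the set of endpoints of its arcs; $M$ is perfect if $V(M)=V(G)$. For a matching $M$ of $G$, $\mathrm{Join}(G,M)$ is the digraph with a vertex $(v,v)$ for each $v\in V(G)\setminus V(M)$ and a vertex $(v,w)$ for each $v\to w\in M$, where $(v,w)\to(x,y)$ is an arc iff $v\to y\in E(G)$. For a digraph $D$, $\mathrm{Split}(D)$ has a vertex $\mathrm{out}(v)$ for each non-sink $v$ of $D$ and a vertex $\mathrm{in}(w)$ for each non-source $w$ of $D$ (all distinct), with $\mathrm{out}(v)\to\mathrm{in}(w)$ an arc iff $v\to w\in E(D)$, and no other arcs. Isomorphism means a bijection of vertex sets mapping arcs exactly onto arcs. *)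

theory Defs
  imports Main
begin

definition digraph :: "'a set \<Rightarrow> ('a \<times> 'a) set \<Rightarrow> bool" where
  "digraph V E \<longleftrightarrow> finite V \<and> E \<subseteq> V \<times> V"

definition is_source :: "'a set \<Rightarrow> ('a \<times> 'a) set \<Rightarrow> 'a \<Rightarrow> bool" where
  "is_source V E v \<longleftrightarrow> v \<in> V \<and> (\<forall>u. (u, v) \<notin> E)"

definition is_sink :: "'a set \<Rightarrow> ('a \<times> 'a) set \<Rightarrow> 'a \<Rightarrow> bool" where
  "is_sink V E v \<longleftrightarrow> v \<in> V \<and> (\<forall>w. (v, w) \<notin> E)"

definition ST_graph :: "'a set \<Rightarrow> ('a \<times> 'a) set \<Rightarrow> bool" where
  "ST_graph V E \<longleftrightarrow> (\<forall>v\<in>V. is_source V E v \<or> is_sink V E v)"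

definition matched_vertices :: "('a \<times> 'a) set \<Rightarrow> 'a set" where
  "matched_vertices M = fst ` M \<union> snd ` M"

definition matching :: "('a \<times> 'a) set \<Rightarrow> ('a \<times> 'a) set \<Rightarrow> bool" where
  "matching E M \<longleftrightarrow> M \<subseteq> E \<and>
     (\<forall>a\<in>M. \<forall>b\<in>M. a \<noteq> b \<longrightarrow> {fst a, snd a} \<inter> {fst b, snd b} = {})"

definition perfect_matching :: "'a set \<Rightarrow> ('a \<times> 'a) set \<Rightarrow> ('a \<times> 'a) set \<Rightarrow> bool" where
  "perfect_matching V E M \<longleftrightarrow> matching E M \<and> matched_vertices M = V"

definition join_V :: "'a set \<Rightarrow> ('a \<times> 'a) set \<Rightarrow> ('a \<times> 'a) set" where
  "join_V V M = {(v, v) | v. v \<in> V - matched_vertices M} \<union> M"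

definition join_E :: "'a set \<Rightarrow> ('a \<times> 'a) set \<Rightarrow> ('a \<times> 'a) set \<Rightarrow> (('a \<times> 'a) \<times> ('a \<times> 'a)) set" where
  "join_E V E M = {(p, q). p \<in> join_V V M \<and> q \<in> join_V V M \<and> (fst p, snd q) \<in> E}"

datatype 'b split_vertex = Out 'b | In 'b

definition split_V :: "'b set \<Rightarrow> ('b \<times> 'b) set \<Rightarrow> 'b split_vertex set" where
  "split_V V E = {Out v | v. v \<in> V \<and> \<not> is_sink V E v} \<union> {In w | w. w \<in> V \<and> \<not> is_source V E w}"

definition split_E :: "'b set \<Rightarrow> ('b \<times> 'b) set \<Rightarrow> ('b split_vertex \<times> 'b split_vertex) set" where
  "split_E V E = {(Out v, In w) | v w. (v, w) \<in> E}"

definition digraph_iso :: "'a set \<Rightarrow> ('a \<times> 'a) set \<Rightarrow> 'c set \<Rightarrow> ('c \<times> 'c) set \<Rightarrow> bool" where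
  "digraph_iso V1 E1 V2 E2 \<longleftrightarrow> (\<exists>f. bij_betw f V1 V2 \<and>
     (\<forall>x\<in>V1. \<forall>y\<in>V1. (x, y) \<in> E1 \<longleftrightarrow> (f x, f y) \<in> E2))"

end

theory Submission
  imports Defs
begin

theorem lemma5:
  fixes V :: "'a set" and E M :: "('a \<times> 'a) set"
  assumes "digraph V E" and "ST_graph V E" and "perfect_matching V E M"
  shows "digraph_iso V E
           (split_V (join_V V M) (join_E V E M)) (split_E (join_V V M) (join_E V E M))"
proof -
  have ME: "M \<subseteq> E" and dis: "\<And>a b. a \<in> M \<Longrightarrow> b \<in> M \<Longrightarrow> a \<noteq> b \<Longrightarrow> {fst a, snd a} \<inter> {fst b, snd b} = {}"
    and MV: "fst ` M \<union> snd ` M = V"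
    using assms(3) unfolding perfect_matching_def matching_def matched_vertices_def by auto
  have EV: "E \<subseteq> V \<times> V" using assms(1) by (simp add: digraph_def)
  have st: "\<And>v. v \<in> V \<Longrightarrow> (\<forall>u. (u, v) \<notin> E) \<or> (\<forall>w. (v, w) \<notin> E)"
    using assms(2) by (auto simp: ST_graph_def is_source_def is_sink_def)
  have srcE: "\<And>x y. (x,y) \<in> E \<Longrightarrow> \<forall>u. (u,x) \<notin> E"
    using st EV by blast
  have snkE: "\<And>x y. (x,y) \<in> E \<Longrightarrow> \<forall>w. (y,w) \<notin> E"
    using st EV by blast
  have u1: "\<And>u w w'. (u,w) \<in> M \<Longrightarrow> (u,w') \<in> M \<Longrightarrow> w = w'"
    using dis by fastforce
  have u2: "\<And>u v v'. (v,u) \<in> M \<Longrightarrow> (v',u) \<in> M \<Longrightarrow> v = v'"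
    using dis by fastforce
  have JV: "join_V V M = M"
    using assms(3) unfolding join_V_def perfect_matching_def by auto
  define JE where "JE = join_E V E M"
  have JE: "\<And>p q. (p,q) \<in> JE \<longleftrightarrow> p \<in> M \<and> q \<in> M \<and> (fst p, snd q) \<in> E"
    unfolding JE_def join_E_def JV by auto
  have loop: "\<And>p. p \<in> M \<Longrightarrow> (p,p) \<in> JE" using JE ME by auto
  have SV: "split_V M JE = Out ` M \<union> In ` M"
    unfolding split_V_def is_sink_def is_source_def using loop by blast
  have SE: "\<And>a b. (a,b) \<in> split_E M JE \<longleftrightarrow> (\<exists>p q. a = Out p \<and> b = In q \<and> p \<in> M \<and> q \<in> M \<and> (fst p, snd q) \<in> E)"
    unfolding split_E_def using JE by auto
  define f where "f u = (if \<exists>w. (u,w) \<in> M then Out (u, SOME w. (u,w) \<in> M) else In (SOME v. (v,u) \<in> M, u))" for u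
  have fO: "\<And>u w. (u,w) \<in> M \<Longrightarrow> f u = Out (u,w)"
    unfolding f_def using u1 by (metis (mono_tags, lifting) someI)
  have nboth: "\<And>u w v. (u,w) \<in> M \<Longrightarrow> (v,u) \<in> M \<Longrightarrow> False"
    using ME srcE by blast
  have fI: "\<And>u v. (v,u) \<in> M \<Longrightarrow> f u = In (v,u)"
    unfolding f_def using u2 nboth by (metis (mono_tags, lifting) someI)
  have bij: "bij_betw f V (Out ` M \<union> In ` M)"
    unfolding bij_betw_def
  proof
    show "inj_on f V"
    proof (rule inj_onI)
      fix x y
      assume xV: "x \<in> V" and yV: "y \<in> V" and fe: "f x = f y"
      obtain p where p: "p \<in> M" "x = fst p \<or> x = snd p" using xV MV by force
      obtain q where q: "q \<in> M" "y = fst q \<or> y = snd q" using yV MV by force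
      have fx: "f x = Out p \<and> x = fst p \<or> f x = In p \<and> x = snd p"
        using p fO fI by (metis prod.collapse)
      have fy: "f y = Out q \<and> y = fst q \<or> f y = In q \<and> y = snd q"
        using q fO fI by (metis prod.collapse)
      show "x = y" using fx fy fe by auto
    qed
    show "f ` V = Out ` M \<union> In ` M"
    proof
      show "f ` V \<subseteq> Out ` M \<union> In ` M" using MV fO fI by auto
      show "Out ` M \<union> In ` M \<subseteq> f ` V"
      proof
        fix z assume "z \<in> Out ` M \<union> In ` M"
        then show "z \<in> f ` V"
        proof
          assume "z \<in> Out ` M" then obtain u w where "(u,w) \<in> M" "z = Out (u,w)" by auto
          then show ?thesis using fO MV by force
        next
          assume "z \<in> In ` M" then obtain u w where "(u,w) \<in> M" "z = In (u,w)" by auto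
          then show ?thesis using fI MV by force
        qed
      qed
    qed
  qed
  have edges: "\<forall>x\<in>V. \<forall>y\<in>V. (x, y) \<in> E \<longleftrightarrow> (f x, f y) \<in> split_E M JE"
  proof (intro ballI iffI)
    fix x y assume xV: "x \<in> V" and yV: "y \<in> V" and e: "(x,y) \<in> E"
    obtain p where p: "p \<in> M" "x = fst p \<or> x = snd p" using xV MV by force
    obtain q where q: "q \<in> M" "y = fst q \<or> y = snd q" using yV MV by force
    have "x = fst p" using p e ME srcE by (metis prod.collapse subsetD)
    moreover have "y = snd q" using q e ME snkE by (metis prod.collapse subsetD)
    ultimately show "(f x, f y) \<in> split_E M JE"
      using SE fO fI p q e by (metis prod.collapse)
  next
    fix x y assume xV: "x \<in> V" and yV: "y \<in> V" and "(f x, f y) \<in> split_E M JE"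
    then obtain p q where pq: "f x = Out p" "f y = In q" "p \<in> M" "q \<in> M" "(fst p, snd q) \<in> E"
      using SE by blast
    obtain p' where p: "p' \<in> M" "x = fst p' \<or> x = snd p'" using xV MV by force
    obtain q' where q: "q' \<in> M" "y = fst q' \<or> y = snd q'" using yV MV by force
    have "p = (x, snd p)" using p pq fO fI by (metis prod.collapse split_vertex.distinct(1) split_vertex.inject(1))
    moreover have "q = (fst q, y)" using q pq fO fI by (metis prod.collapse split_vertex.distinct(1) split_vertex.inject(2))
    ultimately show "(x,y) \<in> E" using pq by (metis fst_conv snd_conv)
  qed
  show ?thesis unfolding digraph_iso_def JV JE_def[symmetric] SV using bij edges by blast
qed

end
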